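(* Let $n\ge0$, $\alpha,\beta\in D_n$ and $1\le k\le 2n+1$. Then $\alpha\preccurlyeq\beta$ if and only if $l_k(\alpha)\preccurlyeq l_k(\beta)$.
   Context: $D_n$ is the set of non-crossing perfect matchings of $\{1,\ldots,2n\}$ (non-crossing $n$-chord diagrams), $D_0=\{\phi\}$. For $1\le k\le 2n+1$, $l_k:D_n\to D_{n+1}$: $l_k(\alpha)$ matches $k$ with $k+1$, and each old point $i$ becomes $i$ if $i<k$ and $i+2$ if $i\ge k$, old pairs kept. Restricted sequence of $\alpha\in D_n$ ($n\ge1$): let $k_n$ be the smallest $k$ with $k$ matched to $k+1$ and let $\alpha'$ be $\alpha$ with that arc removed (renumbered); the restricted sequence is $(k_n,k_{n-1},\ldots,k_1)$ where $(k_{n-1},\ldots,k_1)$ is the restricted sequence of $\alpha'$ (empty for $\phi$). Partial order: $\alpha\preccurlyeq\beta$ iff, writing $(a_n,\ldots,a_1)$ and $(b_n,\ldots,b_1)$ for their restricted sequences, $a_i\le b_i$ for all $1\le i\le n$. *)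

theory Defs
  imports Main
begin

text \<open>A chord diagram on {1..2n} is represented as a set of arcs (i,j) with i < j.\<close>

definition perfect_matching :: "nat \<Rightarrow> (nat \<times> nat) set \<Rightarrow> bool" where
  "perfect_matching n M \<longleftrightarrow>
     (\<forall>(i,j)\<in>M. 1 \<le> i \<and> i < j \<and> j \<le> 2*n) \<and>
     (\<forall>x\<in>{1..2*n}. \<exists>!p. p \<in> M \<and> (fst p = x \<or> snd p = x))"

definition non_crossing :: "(nat \<times> nat) set \<Rightarrow> bool" where
  "non_crossing M \<longleftrightarrow>
     \<not> (\<exists>a b c d. (a,b) \<in> M \<and> (c,d) \<in> M \<and> a < c \<and> c < b \<and> b < d)"

definition D :: "nat \<Rightarrow> (nat \<times> nat) set set" where
  "D n = {M. perfect_matching n M \<and> non_crossing M}"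

definition shift :: "nat \<Rightarrow> nat \<Rightarrow> nat" where
  "shift k i = (if i < k then i else i + 2)"

definition l :: "nat \<Rightarrow> (nat \<times> nat) set \<Rightarrow> (nat \<times> nat) set" where
  "l k M = insert (k, k+1) ((\<lambda>(i,j). (shift k i, shift k j)) ` M)"

definition unshift :: "nat \<Rightarrow> nat \<Rightarrow> nat" where
  "unshift k i = (if i < k then i else i - 2)"

definition remove_arc :: "nat \<Rightarrow> (nat \<times> nat) set \<Rightarrow> (nat \<times> nat) set" where
  "remove_arc k M = (\<lambda>(i,j). (unshift k i, unshift k j)) ` (M - {(k, k+1)})"

text \<open>Restricted sequence (k_n, ..., k_1) of a diagram with n chords, as a list.\<close>
fun rseq :: "nat \<Rightarrow> (nat \<times> nat) set \<Rightarrow> nat list" where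
  "rseq 0 M = []"
| "rseq (Suc n) M =
     (let k = (LEAST k. (k, k+1) \<in> M) in k # rseq n (remove_arc k M))"

definition prec :: "nat \<Rightarrow> (nat \<times> nat) set \<Rightarrow> (nat \<times> nat) set \<Rightarrow> bool" where
  "prec n \<alpha> \<beta> \<longleftrightarrow> list_all2 (\<le>) (rseq n \<alpha>) (rseq n \<beta>)"

end

theory Submission imports Defs begin

fun ins :: "nat \<Rightarrow> nat list \<Rightarrow> nat list" where
  "ins k [] = [k]"
| "ins k (a#as) = (if k \<le> a+1 then k#a#as else a # ins (k-2) as)"

fun vl :: "nat list \<Rightarrow> bool" where
  "vl [] = True"
| "vl [x] = True"
| "vl (x#y#r) = (x \<le> y+1 \<and> vl (y#r))"

lemma vl_tl: "vl (x#r) \<Longrightarrow> vl r"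
  by (cases r) auto

lemma lemH:
  "vl (c#bs) \<Longrightarrow> length as = length bs \<Longrightarrow> j \<le> c \<Longrightarrow>
   list_all2 (\<le>) (ins j as) (c#bs) \<longleftrightarrow> list_all2 (\<le>) as bs"
proof (induction as arbitrary: j c bs)
  case Nil
  then show ?case by simp
next
  case (Cons a as)
  then obtain b' bs' where bs: "bs = b'#bs'" by (cases bs) auto
  show ?case
  proof (cases "j \<le> a+1")
    case True
    then show ?thesis using Cons.prems bs by simp
  next
    case False
    have v: "vl (b'#bs')" and cb: "c \<le> b'+1" using Cons.prems bs by auto
    have "list_all2 (\<le>) (ins (j-2) as) (b'#bs') \<longleftrightarrow> list_all2 (\<le>) as bs'"
      using Cons.IH[OF v] Cons.prems bs cb by simp
    then show ?thesis using False Cons.prems bs cb by auto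
  qed
qed

lemma lemM:
  "length as = length bs \<Longrightarrow> vl bs \<Longrightarrow>
   list_all2 (\<le>) as bs \<longleftrightarrow> list_all2 (\<le>) (ins k as) (ins k bs)"
proof (induction as arbitrary: bs k)
  case Nil
  then show ?case by simp
next
  case (Cons a as)
  then obtain b bs' where bs: "bs = b#bs'" by (cases bs) auto
  have v: "vl bs'" using Cons.prems bs vl_tl by blast
  show ?case
  proof (cases "k \<le> a+1")
    case ka: True
    show ?thesis
    proof (cases "k \<le> b+1")
      case True
      then show ?thesis using ka bs by simp
    next
      case False
      then show ?thesis using ka bs by auto
    qed
  next
    case ka: False
    show ?thesis
    proof (cases "k \<le> b+1")
      case True
      have "list_all2 (\<le>) (ins (k-2) as) (b#bs') \<longleftrightarrow> list_all2 (\<le>) as bs'"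
        using lemH[of b bs' as "k-2"] Cons.prems bs True by simp
      then show ?thesis using ka True bs by auto
    next
      case False
      then show ?thesis using ka bs Cons.IH[OF _ v, of "k-2"] Cons.prems by auto
    qed
  qed
qed

lemma length_rseq: "length (rseq n M) = n"
  by (induction n arbitrary: M) (auto simp: Let_def)

lemma D_arc: assumes "M \<in> D n" "(i,j) \<in> M" shows "1 \<le> i \<and> i < j \<and> j \<le> 2*n"
proof -
  have "\<forall>(i,j)\<in>M. 1 \<le> i \<and> i < j \<and> j \<le> 2*n" using assms(1) by (simp add: D_def perfect_matching_def)
  then show ?thesis using assms(2) by fast
qed

lemma D_U: assumes "M \<in> D n" "x \<in> {1..2*n}" shows "\<exists>!p. p \<in> M \<and> (fst p = x \<or> snd p = x)"
proof -
  have "\<forall>x\<in>{1..2*n}. \<exists>!p. p \<in> M \<and> (fst p = x \<or> snd p = x)" using assms(1) by (simp add: D_def perfect_matching_def)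
  then show ?thesis using assms(2) by fast
qed

lemma D_uniq: assumes a: "M \<in> D n" "p \<in> M" "q \<in> M" "fst p = x \<or> snd p = x" "fst q = x \<or> snd q = x"
  shows "p = q"
proof -
  obtain i j where p: "p = (i,j)" by (cases p)
  have "1 \<le> i \<and> i < j \<and> j \<le> 2*n" using D_arc a p by blast
  then have "x \<in> {1..2*n}" using a p by auto
  then have "\<exists>!p. p \<in> M \<and> (fst p = x \<or> snd p = x)" using D_U a(1) by blast
  then show "p = q" using a(2-5) by (metis (no_types, lifting))
qed

lemma D_ex: "M \<in> D n \<Longrightarrow> 1 \<le> x \<Longrightarrow> x \<le> 2*n \<Longrightarrow> \<exists>p\<in>M. fst p = x \<or> snd p = x"
  using D_U[of M n x] by (metis atLeastAtMost_iff)

lemma D_nc: assumes "M \<in> D n" "(a,b) \<in> M" "(c,d) \<in> M" "a < c" "c < b" "b < d" shows False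
proof -
  have "non_crossing M" using assms(1) by (simp add: D_def)
  then show False using assms(2-6) unfolding non_crossing_def by blast
qed

lemma D0: "M \<in> D 0 \<Longrightarrow> M = {}"
proof (rule ccontr)
  assume "M \<in> D 0" "M \<noteq> {}"
  then obtain i j where "(i,j) \<in> M" by auto
  then show False using D_arc[OF \<open>M \<in> D 0\<close>] by fastforce
qed

lemma G1: assumes "M \<in> D (Suc n)" shows "\<exists>k. (k,k+1) \<in> M"
proof -
  obtain p0 where "p0 \<in> M" using D_ex[OF assms, of 1] by auto
  then obtain p where p: "p \<in> M" and pm: "\<forall>q. q \<in> M \<longrightarrow> snd p - fst p \<le> snd q - fst q"
    using ex_has_least_nat[of "\<lambda>q. q \<in> M" p0 "\<lambda>q. snd q - fst q"] by blast
  obtain i j where pij: "p = (i,j)" by (cases p)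
  have ij: "1 \<le> i \<and> i < j \<and> j \<le> 2*Suc n" using D_arc assms p pij by blast
  show ?thesis
  proof (rule ccontr)
    assume nk: "\<not> ?thesis"
    then have j: "i+1 < j" using ij p pij by (metis Suc_eq_plus1 less_SucE linorder_neqE_nat not_less_eq)
    obtain q where q: "q \<in> M" "fst q = i+1 \<or> snd q = i+1" using D_ex[OF assms, of "i+1"] ij j by auto
    obtain x y where qxy: "q = (x,y)" by (cases q)
    have xy: "1 \<le> x \<and> x < y \<and> y \<le> 2*Suc n" using D_arc assms q qxy by blast
    show False
    proof (cases "x = i+1")
      case True
      have "y \<noteq> j" using D_uniq[OF assms p q(1), of j] pij qxy True j by auto
      moreover have "\<not> y < j" using pm q qxy pij True xy by force
      ultimately have "j < y" by simp
      then show False using D_nc[OF assms, of i j x y] p q pij qxy True j by auto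
    next
      case False
      then have y: "y = i+1" using q qxy by auto
      have "x \<noteq> i" using D_uniq[OF assms p q(1), of i] pij qxy y j by auto
      then have "x < i" using xy y by auto
      then show False using D_nc[OF assms, of x "i+1" i j] p q pij qxy y j by auto
    qed
  qed
qed

definition sp :: "nat \<Rightarrow> nat \<times> nat \<Rightarrow> nat \<times> nat" where
  "sp k = (\<lambda>(i,j). (shift k i, shift k j))"
definition up :: "nat \<Rightarrow> nat \<times> nat \<Rightarrow> nat \<times> nat" where
  "up k = (\<lambda>(i,j). (unshift k i, unshift k j))"

lemma l_eq: "l k M = insert (k,k+1) (sp k ` M)"
  unfolding l_def sp_def by simp
lemma rem_eq: "remove_arc k M = up k ` (M - {(k,k+1)})"
  unfolding remove_arc_def up_def by simp

lemma remove_l: "remove_arc k (l k M) = M"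
proof -
  have "l k M - {(k,k+1)} = sp k ` M"
    by (auto simp: l_eq sp_def shift_def split: if_splits)
  moreover have "up k ` sp k ` M = M"
  proof -
    have "\<forall>p\<in>M. up k (sp k p) = p" by (auto simp: up_def sp_def shift_def unshift_def)
    then have "up k ` sp k ` M = id ` M" unfolding image_image by (intro image_cong) auto
    then show ?thesis by simp
  qed
  ultimately show ?thesis by (simp add: rem_eq)
qed

lemma least_l1:
  assumes "\<forall>x. (x,x+1) \<in> M \<longrightarrow> k \<le> x+1"
  shows "(LEAST x. (x,x+1) \<in> l k M) = k"
proof (rule Least_equality)
  show "(k, k+1) \<in> l k M" by (simp add: l_eq)
next
  fix y assume "(y, y+1) \<in> l k M"
  then have "(y,y+1) = (k,k+1) \<or> (y,y+1) \<in> sp k ` M" by (simp only: l_eq insert_iff)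
  then have "y = k \<or> (\<exists>i j. (i,j) \<in> M \<and> shift k i = y \<and> shift k j = y+1)"
  proof
    assume "(y,y+1) \<in> sp k ` M"
    then obtain p where p: "p \<in> M" "sp k p = (y,y+1)" by (metis imageE)
    obtain i j where "p = (i,j)" by (cases p)
    then show ?thesis using p by (auto simp: sp_def)
  qed simp
  then show "k \<le> y"
  proof
    assume "\<exists>i j. (i,j) \<in> M \<and> shift k i = y \<and> shift k j = y+1"
    then obtain i j where "(i,j) \<in> M" "shift k i = y" "shift k j = y+1" by blast
    then show "k \<le> y" using assms by (auto simp: shift_def split: if_splits)
  qed simp
qed

lemma least_l2:
  assumes "(m,m+1) \<in> M" "\<forall>x. (x,x+1) \<in> M \<longrightarrow> m \<le> x" "m+2 \<le> k"
  shows "(LEAST x. (x,x+1) \<in> l k M) = m"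
proof (rule Least_equality)
  show "(m, m+1) \<in> l k M" using assms
    by (auto simp: l_eq sp_def shift_def intro!: rev_image_eqI[of "(m,m+1)"])
next
  fix y assume "(y, y+1) \<in> l k M"
  then have "(y,y+1) = (k,k+1) \<or> (y,y+1) \<in> sp k ` M" by (simp only: l_eq insert_iff)
  then have "y = k \<or> (\<exists>i j. (i,j) \<in> M \<and> shift k i = y \<and> shift k j = y+1)"
  proof
    assume "(y,y+1) \<in> sp k ` M"
    then obtain p where p: "p \<in> M" "sp k p = (y,y+1)" by (metis imageE)
    obtain i j where "p = (i,j)" by (cases p)
    then show ?thesis using p by (auto simp: sp_def)
  qed simp
  then show "m \<le> y"
  proof
    assume "\<exists>i j. (i,j) \<in> M \<and> shift k i = y \<and> shift k j = y+1"
    then obtain i j where "(i,j) \<in> M" "shift k i = y" "shift k j = y+1" by blast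
    then show "m \<le> y" using assms by (auto simp: shift_def split: if_splits)
  qed (use assms in simp)
qed

lemma other_arcs:
  assumes "M \<in> D n" "(m,m+1) \<in> M" "(i,j) \<in> M" "(i,j) \<noteq> (m,m+1)"
  shows "i \<noteq> m \<and> i \<noteq> m+1 \<and> j \<noteq> m \<and> j \<noteq> m+1"
proof -
  have u1: "(m,m+1) = (i,j)" if "i = m \<or> j = m" using D_uniq[OF assms(1) assms(2) assms(3), of m] that by auto
  have u2: "(m,m+1) = (i,j)" if "i = m+1 \<or> j = m+1" using D_uniq[OF assms(1) assms(2) assms(3), of "m+1"] that by auto
  show ?thesis using u1 u2 assms(4) by metis
qed

lemma remove_l2:
  assumes "M \<in> D n" "(m,m+1) \<in> M" "m+2 \<le> k"
  shows "remove_arc m (l k M) = l (k-2) (remove_arc m M)"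
proof -
  have e1: "l k M - {(m,m+1)} = insert (k,k+1) (sp k ` (M - {(m,m+1)}))"
    using assms(3) by (auto simp: l_eq sp_def shift_def split: if_splits)
  have e2: "\<forall>p \<in> M - {(m,m+1)}. up m (sp k p) = sp (k-2) (up m p)"
  proof
    fix p assume p: "p \<in> M - {(m,m+1)}"
    obtain i j where pij: "p = (i,j)" by (cases p)
    have "i \<noteq> m \<and> i \<noteq> m+1 \<and> j \<noteq> m \<and> j \<noteq> m+1" using other_arcs[OF assms(1,2)] p pij by blast
    then show "up m (sp k p) = sp (k-2) (up m p)" using assms(3) pij
      by (auto simp: up_def sp_def shift_def unshift_def)
  qed
  have "remove_arc m (l k M) = up m ` (l k M - {(m,m+1)})" by (rule rem_eq)
  also have "\<dots> = up m ` (insert (k,k+1) (sp k ` (M - {(m,m+1)})))" by (simp only: e1)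
  also have "\<dots> = insert (up m (k,k+1)) (up m ` sp k ` (M - {(m,m+1)}))" by (rule image_insert)
  also have "up m (k,k+1) = (k-2, k-2+1)" using assms(3) by (simp add: up_def unshift_def)
  also have "up m ` sp k ` (M - {(m,m+1)}) = sp (k-2) ` up m ` (M - {(m,m+1)})"
    unfolding image_image using e2 by (intro image_cong) auto
  finally show ?thesis by (simp add: l_eq rem_eq)
qed

lemma unshift_lt: "x \<noteq> m \<Longrightarrow> x \<noteq> m+1 \<Longrightarrow> y \<noteq> m \<Longrightarrow> y \<noteq> m+1 \<Longrightarrow>
   unshift m x < unshift m y \<longleftrightarrow> x < y"
  by (auto simp: unshift_def)

lemma unshift_eq: "x \<noteq> m \<Longrightarrow> x \<noteq> m+1 \<Longrightarrow> y \<noteq> m \<Longrightarrow> y \<noteq> m+1 \<Longrightarrow>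
   unshift m x = unshift m y \<longleftrightarrow> x = y"
  by (auto simp: unshift_def)

lemma G2:
  assumes M: "M \<in> D (Suc n)" and mm: "(m,m+1) \<in> M"
  shows "remove_arc m M \<in> D n"
proof -
  let ?f = "unshift m"
  let ?M' = "remove_arc m M"
  have mb: "1 \<le> m \<and> m+1 \<le> 2*Suc n" using D_arc[OF M mm] by simp
  have pre: "\<And>a b. (a,b) \<in> ?M' \<Longrightarrow> \<exists>i j. (i,j) \<in> M \<and> (i,j) \<noteq> (m,m+1) \<and> a = ?f i \<and> b = ?f j"
    by (auto simp: rem_eq up_def)
  have oth: "\<And>i j. (i,j) \<in> M \<Longrightarrow> (i,j) \<noteq> (m,m+1) \<Longrightarrow> i \<noteq> m \<and> i \<noteq> m+1 \<and> j \<noteq> m \<and> j \<noteq> m+1"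
    using other_arcs[OF M mm] by blast
  have bounds: "\<forall>(a,b)\<in>?M'. 1 \<le> a \<and> a < b \<and> b \<le> 2*n"
  proof (clarify)
    fix a b assume "(a,b) \<in> ?M'"
    then obtain i j where ij: "(i,j) \<in> M" "(i,j) \<noteq> (m,m+1)" "a = ?f i" "b = ?f j" using pre by blast
    have "1 \<le> i \<and> i < j \<and> j \<le> 2*Suc n" using D_arc[OF M ij(1)] .
    moreover have "i \<noteq> m \<and> i \<noteq> m+1 \<and> j \<noteq> m \<and> j \<noteq> m+1" using oth ij by blast
    ultimately show "1 \<le> a \<and> a < b \<and> b \<le> 2*n" using ij mb by (auto simp: unshift_def)
  qed
  have uniq: "\<forall>x\<in>{1..2*n}. \<exists>!p. p \<in> ?M' \<and> (fst p = x \<or> snd p = x)"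
  proof
    fix x assume x: "x \<in> {1..2*n}"
    define y where "y = (if x < m then x else x+2)"
    have y: "y \<noteq> m" "y \<noteq> m+1" "1 \<le> y" "y \<le> 2*Suc n" "?f y = x" using x mb by (auto simp: y_def unshift_def)
    obtain p where p: "p \<in> M" "fst p = y \<or> snd p = y" using D_ex[OF M y(3) y(4)] by blast
    have pne: "p \<noteq> (m,m+1)" using p y by auto
    show "\<exists>!p. p \<in> ?M' \<and> (fst p = x \<or> snd p = x)"
    proof (rule ex1I[of _ "up m p"])
      show "up m p \<in> ?M' \<and> (fst (up m p) = x \<or> snd (up m p) = x)"
        using p pne y by (auto simp: rem_eq up_def split: prod.splits)
    next
      fix q assume q: "q \<in> ?M' \<and> (fst q = x \<or> snd q = x)"
      obtain a b where qab: "q = (a,b)" by (cases q)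
      then obtain i j where ij: "(i,j) \<in> M" "(i,j) \<noteq> (m,m+1)" "a = ?f i" "b = ?f j" using pre q by blast
      have o: "i \<noteq> m \<and> i \<noteq> m+1 \<and> j \<noteq> m \<and> j \<noteq> m+1" using oth ij by blast
      have "i = y \<or> j = y" using q qab ij o y unshift_eq[of _ m y] by auto
      then have "(i,j) = p" using D_uniq[OF M ij(1) p(1), of y] p by auto
      then show "q = up m p" using qab ij by (auto simp: up_def)
    qed
  qed
  have nc: "non_crossing ?M'"
    unfolding non_crossing_def
  proof (clarify)
    fix a b c d assume h: "(a,b) \<in> ?M'" "(c,d) \<in> ?M'" "a < c" "c < b" "b < d"
    obtain i j where ij: "(i,j) \<in> M" "(i,j) \<noteq> (m,m+1)" "a = ?f i" "b = ?f j" using pre h(1) by blast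
    obtain i' j' where ij': "(i',j') \<in> M" "(i',j') \<noteq> (m,m+1)" "c = ?f i'" "d = ?f j'" using pre h(2) by blast
    have o: "i \<noteq> m \<and> i \<noteq> m+1 \<and> j \<noteq> m \<and> j \<noteq> m+1" using oth ij by blast
    have o': "i' \<noteq> m \<and> i' \<noteq> m+1 \<and> j' \<noteq> m \<and> j' \<noteq> m+1" using oth ij' by blast
    have "i < i'" "i' < j" "j < j'" using h ij ij' o o' unshift_lt by auto
    then show False using D_nc[OF M ij(1) ij'(1)] by blast
  qed
  show ?thesis unfolding D_def perfect_matching_def using bounds uniq nc by blast
qed

lemma rseq_l:
  "M \<in> D n \<Longrightarrow> 1 \<le> k \<Longrightarrow> k \<le> 2*n+1 \<Longrightarrow> rseq (Suc n) (l k M) = ins k (rseq n M)"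
proof (induction n arbitrary: M k)
  case 0
  then have "M = {}" using D0 by blast
  moreover have "(LEAST x. x = k) = k" by (rule Least_equality) auto
  ultimately show ?case by (simp add: l_eq)
next
  case (Suc n)
  define m where "m = (LEAST x. (x,x+1) \<in> M)"
  have mm: "(m,m+1) \<in> M" using G1[OF Suc.prems(1)] unfolding m_def by (rule LeastI_ex)
  have mle: "\<forall>x. (x,x+1) \<in> M \<longrightarrow> m \<le> x" unfolding m_def by (auto intro: Least_le)
  have m1: "1 \<le> m" using D_arc[OF Suc.prems(1) mm] by simp
  have r: "rseq (Suc n) M = m # rseq n (remove_arc m M)" by (simp add: m_def Let_def)
  show ?case
  proof (cases "k \<le> m+1")
    case True
    have "\<forall>x. (x,x+1) \<in> M \<longrightarrow> k \<le> x+1" using mle True by auto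
    then have "(LEAST x. (x,x+1) \<in> l k M) = k" by (rule least_l1)
    then have "rseq (Suc (Suc n)) (l k M) = k # rseq (Suc n) M"
      by (simp add: Let_def remove_l)
    then show ?thesis using r True by simp
  next
    case False
    have "(LEAST x. (x,x+1) \<in> l k M) = m" using least_l2[OF mm mle] False by simp
    then have "rseq (Suc (Suc n)) (l k M) = m # rseq (Suc n) (l (k-2) (remove_arc m M))"
      using remove_l2[OF Suc.prems(1) mm] False by (simp add: Let_def)
    also have "rseq (Suc n) (l (k-2) (remove_arc m M)) = ins (k-2) (rseq n (remove_arc m M))"
      using Suc.IH[OF G2[OF Suc.prems(1) mm]] False m1 Suc.prems by simp
    finally show ?thesis using r False by simp
  qed
qed

lemma vl_rseq: "M \<in> D n \<Longrightarrow> vl (rseq n M)"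
proof (induction n arbitrary: M)
  case 0
  then show ?case by simp
next
  case (Suc n)
  note IH = Suc.IH
  note MD = Suc.prems(1)
  define m where "m = (LEAST x. (x,x+1) \<in> M)"
  have mm: "(m,m+1) \<in> M" using G1[OF MD] unfolding m_def by (rule LeastI_ex)
  have mle: "\<forall>x. (x,x+1) \<in> M \<longrightarrow> m \<le> x" unfolding m_def by (auto intro: Least_le)
  have M': "remove_arc m M \<in> D n" using G2[OF MD mm] .
  have r: "rseq (Suc n) M = m # rseq n (remove_arc m M)" by (simp add: m_def Let_def)
  show ?case
  proof (cases n)
    case 0
    then show ?thesis using r by simp
  next
    case (Suc n')
    note nS = Suc
    define m' where "m' = (LEAST x. (x,x+1) \<in> remove_arc m M)"
    have "\<exists>x. (x,x+1) \<in> remove_arc m M" using G1[of "remove_arc m M" n'] M' nS by simp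
    then have mm': "(m',m'+1) \<in> remove_arc m M" unfolding m'_def by (rule LeastI_ex)
    have r': "rseq n (remove_arc m M) = m' # rseq n' (remove_arc m' (remove_arc m M))"
      unfolding nS by (simp add: m'_def Let_def)
    have "(m',m'+1) \<in> up m ` (M - {(m,m+1)})" using mm' by (simp only: rem_eq)
    then obtain p where p: "p \<in> M - {(m,m+1)}" "up m p = (m',m'+1)"
      by (metis imageE)
    obtain i j where pij: "p = (i,j)" by (cases p)
    have ij12: "(i,j) \<in> M" "(i,j) \<noteq> (m,m+1)" using p pij by auto
    have ij34: "unshift m i = m'" "unshift m j = m'+1" using p(2) pij by (simp_all add: up_def)
    note ij = ij12 ij34
    have o: "i \<noteq> m \<and> i \<noteq> m+1 \<and> j \<noteq> m \<and> j \<noteq> m+1" using other_arcs[OF MD mm ij(1,2)] .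
    have ijlt: "i < j" using D_arc[OF MD ij(1)] by simp
    have "m \<le> m'+1"
    proof (rule ccontr)
      assume "\<not> m \<le> m'+1"
      then have lt: "m'+1 < m" by simp
      have jm: "j < m"
      proof (rule ccontr)
        assume "\<not> j < m"
        then have "m+2 \<le> j" using o by simp
        then have "unshift m j = j - 2" by (simp add: unshift_def)
        then show False using ij(4) lt \<open>m+2 \<le> j\<close> by simp
      qed
      then have j: "j = m'+1" using ij(4) by (simp add: unshift_def)
      have "i < m" using jm ijlt by simp
      then have i: "i = m'" using ij(3) by (simp add: unshift_def)
      have "(m', m'+1) \<in> M" using ij(1) i j by simp
      then have "m \<le> m'" using mle by blast
      then show False using lt by simp
    qed
    then show ?thesis using r r' IH[OF M'] by simp
  qed
qed

theorem mainTheorem9: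
  fixes n k :: nat and \<alpha> \<beta> :: "(nat \<times> nat) set"
  assumes "\<alpha> \<in> D n" and "\<beta> \<in> D n" and "1 \<le> k" and "k \<le> 2*n + 1"
  shows "prec n \<alpha> \<beta> \<longleftrightarrow> prec (Suc n) (l k \<alpha>) (l k \<beta>)"
  unfolding prec_def
  using rseq_l[OF assms(1,3,4)] rseq_l[OF assms(2,3,4)] lemM[of "rseq n \<alpha>" "rseq n \<beta>" k]
    length_rseq vl_rseq[OF assms(2)] by simp

end
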